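(* Let $m,n,P$ be positive integers with $P \ge mn+n-1$, let $N_1,N_0$ be positive integers with $m \mid N_1$ and $n \mid N_0$, and let $\bm{W} \in \mathbb{R}^{N_1 \times N_0}$ and $\bm{x} \in \mathbb{R}^{N_0}$. Consider the Generalized PolyDot scheme for computing $\bm{s}=\bm{W}\bm{x}$ with $P$ nodes defined in the context. Then the recovery threshold of this scheme is $mn+n-1$: from the computed outputs $\widetilde{\bm{s}}_p$ of any $mn+n-1$ of the $P$ nodes, the whole product $\bm{s}=\bm{W}\bm{x}$ can be recovered. Consequently, the scheme tolerates up to $P-mn-n+1$ erasures (nodes whose outputs are missing).
   Context: Block-partition $\bm{W}$ into an $m\times n$ grid of blocks $\bm{W}_{i,j}\in\mathbb{R}^{(N_1/m)\times(N_0/n)}$ ($i=0,\dots,m-1$, $j=0,\dots,n-1$), and partition $\bm{x}$ into $n$ consecutive sub-vectors $\bm{x}_j \in \mathbb{R}^{N_0/n}$; correspondingly $\bm{s}=\bm{W}\bm{x}$ splits into $m$ sub-vectors $\bm{s}_i=\sum_{j}\bm{W}_{i,j}\bm{x}_j$. Define the polynomials $\widetilde{\bm{W}}(u,v)=\sum_{i=0}^{m-1}\sum_{j=0}^{n-1}\bm{W}_{i,j}u^i v^j$ and $\widetilde{\bm{x}}(v)=\sum_{j=0}^{n-1}\bm{x}_j v^{n-1-j}$. Choose $P$ distinct real numbers $b_0,\dots,b_{P-1}$ and set $a_p=b_p^{\,n}$. Node $p$ ($p=0,\dots,P-1$) stores only $\widetilde{\bm{W}}(a_p,b_p)$ (an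 $\frac{N_1}{m}\times\frac{N_0}{n}$ matrix) and $\widetilde{\bm{x}}(b_p)$ (an $\frac{N_0}{n}$-vector) and computes $\widetilde{\bm{s}}_p=\widetilde{\bm{W}}(a_p,b_p)\widetilde{\bm{x}}(b_p)$. The recovery threshold is the number of node outputs, out of $P$, that a decoder needs (from any subset of nodes of that size) to recover $\bm{s}$. *)

theory Defs
  imports Complex_Main
begin

text \<open>Matrices are functions nat => nat => real (row, column), vectors nat => real;
  only indices within the stated dimensions are meaningful.\<close>

definition mat_vec :: "nat \<Rightarrow> nat \<Rightarrow> (nat \<Rightarrow> nat \<Rightarrow> real) \<Rightarrow> (nat \<Rightarrow> real) \<Rightarrow> (nat \<Rightarrow> real)" where
  "mat_vec R C A v = (\<lambda>r. if r < R then (\<Sum>c<C. A r c * v c) else 0)"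

definition block :: "nat \<Rightarrow> nat \<Rightarrow> nat \<Rightarrow> nat \<Rightarrow> (nat \<Rightarrow> nat \<Rightarrow> real) \<Rightarrow> nat \<Rightarrow> nat \<Rightarrow> (nat \<Rightarrow> nat \<Rightarrow> real)" where
  "block N1 N0 m n W i j = (\<lambda>r c. W (i * (N1 div m) + r) (j * (N0 div n) + c))"

definition subvec :: "nat \<Rightarrow> nat \<Rightarrow> (nat \<Rightarrow> real) \<Rightarrow> nat \<Rightarrow> (nat \<Rightarrow> real)" where
  "subvec N0 n x j = (\<lambda>c. x (j * (N0 div n) + c))"

definition W_tilde :: "nat \<Rightarrow> nat \<Rightarrow> nat \<Rightarrow> nat \<Rightarrow> (nat \<Rightarrow> nat \<Rightarrow> real) \<Rightarrow> real \<Rightarrow> real \<Rightarrow> (nat \<Rightarrow> nat \<Rightarrow> real)" where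
  "W_tilde N1 N0 m n W u v = (\<lambda>r c. \<Sum>i<m. \<Sum>j<n. block N1 N0 m n W i j r c * u ^ i * v ^ j)"

definition x_tilde :: "nat \<Rightarrow> nat \<Rightarrow> (nat \<Rightarrow> real) \<Rightarrow> real \<Rightarrow> (nat \<Rightarrow> real)" where
  "x_tilde N0 n x v = (\<lambda>c. \<Sum>j<n. subvec N0 n x j c * v ^ (n - 1 - j))"

definition node_output :: "nat \<Rightarrow> nat \<Rightarrow> nat \<Rightarrow> nat \<Rightarrow> (nat \<Rightarrow> real) \<Rightarrow> (nat \<Rightarrow> nat \<Rightarrow> real) \<Rightarrow> (nat \<Rightarrow> real) \<Rightarrow> nat \<Rightarrow> (nat \<Rightarrow> real)" where
  "node_output N1 N0 m n b W x p =
     mat_vec (N1 div m) (N0 div n) (W_tilde N1 N0 m n W ((b p) ^ n) (b p)) (x_tilde N0 n x (b p))"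

end

theory Submission
  imports Defs "HOL-Computational_Algebra.Polynomial"
begin

definition cf :: "nat \<Rightarrow> nat \<Rightarrow> (nat \<Rightarrow> nat \<Rightarrow> real) \<Rightarrow> (nat \<Rightarrow> real) \<Rightarrow> nat \<Rightarrow> nat \<Rightarrow> nat \<Rightarrow> nat \<Rightarrow> real" where
  "cf d1 d0 W x r i j k = (\<Sum>c<d0. W (i*d1+r) (j*d0+c) * x (k*d0+c))"

definition Qp :: "nat \<Rightarrow> nat \<Rightarrow> nat \<Rightarrow> nat \<Rightarrow> (nat \<Rightarrow> nat \<Rightarrow> real) \<Rightarrow> (nat \<Rightarrow> real) \<Rightarrow> nat \<Rightarrow> real poly" where
  "Qp m n d1 d0 W x r = (\<Sum>i<m. \<Sum>j<n. \<Sum>k<n. monom (cf d1 d0 W x r i j k) (n*i+j+(n-1-k)))"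

lemma pw: "(v::real)^(n*i+j+(n-1-k)) = (v^n)^i * v^j * v^(n-1-k)"
  by (simp only: power_add power_mult)

lemma poly_Qp:
  assumes "r < N1 div m"
  shows "node_output N1 N0 m n b W x p r = poly (Qp m n (N1 div m) (N0 div n) W x r) (b p)"
proof -
  let ?v = "b p"
  have "node_output N1 N0 m n b W x p r =
    (\<Sum>c<N0 div n. (\<Sum>i<m. \<Sum>j<n. W (i*(N1 div m)+r) (j*(N0 div n)+c) * (?v^n)^i * ?v^j) *
       (\<Sum>k<n. x (k*(N0 div n)+c) * ?v^(n-1-k)))"
    using assms by (simp add: node_output_def mat_vec_def W_tilde_def x_tilde_def block_def subvec_def)
  also have "\<dots> = (\<Sum>c<N0 div n. \<Sum>i<m. \<Sum>j<n. \<Sum>k<n. (W (i*(N1 div m)+r) (j*(N0 div n)+c) * (?v^n)^i * ?v^j) * (x (k*(N0 div n)+c) * ?v^(n-1-k)))"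
    apply (simp only: sum_distrib_right) by (simp only: sum_distrib_left)
  also have "\<dots> = (\<Sum>c<N0 div n. \<Sum>i<m. \<Sum>j<n. \<Sum>k<n. W (i*(N1 div m)+r) (j*(N0 div n)+c) * x (k*(N0 div n)+c) * ?v^(n*i+j+(n-1-k)))"
    apply (intro sum.cong refl) apply (simp only: pw) by (simp only: mult_ac)
  also have "\<dots> = (\<Sum>i<m. \<Sum>j<n. \<Sum>k<n. \<Sum>c<N0 div n. W (i*(N1 div m)+r) (j*(N0 div n)+c) * x (k*(N0 div n)+c) * ?v^(n*i+j+(n-1-k)))"
    by (simp only: sum.swap[where A="{..<N0 div n}"])
  also have "\<dots> = poly (Qp m n (N1 div m) (N0 div n) W x r) ?v"
    by (simp add: Qp_def cf_def poly_sum poly_monom sum_distrib_right)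
  finally show ?thesis .
qed

lemma exp_eq:
  fixes n i i' j k :: nat
  assumes "j < n" "k < n"
  shows "(n*i'+j+(n-1-k) = n*i+(n-1)) \<longleftrightarrow> (i' = i \<and> j = k)"
proof
  assume h: "n*i'+j+(n-1-k) = n*i+(n-1)"
  have "i' = i"
  proof (rule ccontr)
    assume "i' \<noteq> i"
    then consider "i' \<ge> Suc i" | "Suc i' \<le> i" by linarith
    then show False
    proof cases
      case 1
      then have "n*i' \<ge> n*i + n" using mult_le_mono2[OF 1, of n] by simp
      then show False using h assms by linarith
    next
      case 2
      then have "n*i \<ge> n*i' + n" using mult_le_mono2[OF 2, of n] by simp
      then show False using h assms by linarith
    qed
  qed
  then show "i' = i \<and> j = k" using h assms by simp
qed (use assms in auto)

lemma coeff_Qp: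
  assumes "i < m" "0 < n"
  shows "coeff (Qp m n d1 d0 W x r) (n*i+(n-1)) = (\<Sum>j<n. cf d1 d0 W x r i j j)"
proof -
  have "coeff (Qp m n d1 d0 W x r) (n*i+(n-1)) =
     (\<Sum>i'<m. \<Sum>j<n. \<Sum>k<n. if i' = i \<and> j = k then cf d1 d0 W x r i' j k else 0)"
    unfolding Qp_def coeff_sum coeff_monom
    apply (rule sum.cong, rule refl)+
    using exp_eq by (auto simp: eq_commute)
  also have "\<dots> = (\<Sum>i'<m. if i' = i then (\<Sum>j<n. cf d1 d0 W x r i' j j) else 0)"
    by (rule sum.cong, rule refl) (auto simp: if_distrib sum.delta' cong: if_cong)
  also have "\<dots> = (\<Sum>j<n. cf d1 d0 W x r i j j)"
    using assms by (simp add: sum.delta')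
  finally show ?thesis .
qed

lemma degree_Qp:
  assumes "0 < n"
  shows "degree (Qp m n d1 d0 W x r) \<le> m*n+n-2"
  unfolding Qp_def
proof (intro degree_sum_le finite_lessThan)
  fix i j k assume "i \<in> {..<m}" "j \<in> {..<n}" "k \<in> {..<n}"
  then have "i + 1 \<le> m" "j + 1 \<le> n" by auto
  then have "n*(i+1) \<le> n*m" by (intro mult_le_mono2)
  then have "n*i+j+(n-1-k) \<le> m*n+n-2" using \<open>j+1\<le>n\<close> by (simp add: algebra_simps)
  then show "degree (monom (cf d1 d0 W x r i j k) (n*i+j+(n-1-k))) \<le> m*n+n-2"
    using degree_monom_le order_trans by blast
qed

lemma block_sum:
  assumes "N1 = m*d1" "N0 = n*d0" "0 < d1" "R < N1"
  shows "mat_vec N1 N0 W x R = (\<Sum>j<n. cf d1 d0 W x (R mod d1) (R div d1) j j)"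
proof -
  have R: "R = (R div d1)*d1 + R mod d1" by simp
  have "mat_vec N1 N0 W x R = (\<Sum>c<n*d0. W R c * x c)"
    using assms by (simp add: mat_vec_def)
  also have "\<dots> = (\<Sum>j<n. \<Sum>c\<in>{j*d0..<j*d0+d0}. W R c * x c)"
    by (rule sum.nat_group[symmetric])
  also have "\<dots> = (\<Sum>j<n. \<Sum>c<d0. W R (j*d0+c) * x (j*d0+c))"
  proof (rule sum.cong[OF refl])
    fix j
    have e: "{j*d0..<j*d0+d0} = (\<lambda>c. j*d0+c) ` {..<d0}"
      apply (auto simp: image_iff)
      apply (rule_tac x="x - j*d0" in bexI)
      by auto
    show "(\<Sum>c\<in>{j*d0..<j*d0+d0}. W R c * x c) = (\<Sum>c<d0. W R (j*d0+c) * x (j*d0+c))"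
      unfolding e by (subst sum.reindex) (auto simp: inj_on_def)
  qed
  also have "\<dots> = (\<Sum>j<n. cf d1 d0 W x (R mod d1) (R div d1) j j)"
    unfolding cf_def using R by simp
  finally show ?thesis .
qed

theorem theorem1:
  fixes m n P N1 N0 :: nat and b :: "nat \<Rightarrow> real" and S :: "nat set"
  assumes "0 < m" "0 < n" "0 < P" "0 < N1" "0 < N0"
    and "P \<ge> m * n + n - 1"
    and "m dvd N1" "n dvd N0"
    and "inj_on b {..<P}"
    and "S \<subseteq> {..<P}" "card S \<ge> m * n + n - 1"
  shows "\<exists>dec :: (nat \<Rightarrow> nat \<Rightarrow> real) \<Rightarrow> (nat \<Rightarrow> real).
           \<forall>(W :: nat \<Rightarrow> nat \<Rightarrow> real) (x :: nat \<Rightarrow> real).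
             dec (\<lambda>p. if p \<in> S then node_output N1 N0 m n b W x p else (\<lambda>_. 0))
               = mat_vec N1 N0 W x"
proof -
  define d1 where "d1 = N1 div m"
  define d0 where "d0 = N0 div n"
  have N1: "N1 = m*d1" using assms(7) unfolding d1_def by simp
  have N0: "N0 = n*d0" using assms(8) unfolding d0_def by simp
  have d1: "0 < d1" using N1 assms(4) by (cases d1) auto
  define out where "out W x = (\<lambda>p. if p \<in> S then node_output N1 N0 m n b W x p else (\<lambda>_. 0))" for W x
  have finS: "finite S" using assms(10) finite_subset by blast
  have cardA: "card (b ` S) = card S"
    using assms(9,10) by (intro card_image) (rule inj_on_subset)
  have key: "mat_vec N1 N0 W x = mat_vec N1 N0 W' x'" if eq: "out W x = out W' x'" for W x W' x'
  proof
    fix R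
    show "mat_vec N1 N0 W x R = mat_vec N1 N0 W' x' R"
    proof (cases "R < N1")
      case False
      then show ?thesis by (simp add: mat_vec_def)
    next
      case True
      define r where "r = R mod d1"
      define i where "i = R div d1"
      have r: "r < d1" using d1 unfolding r_def by simp
      have i: "i < m" using True N1 d1 unfolding i_def
        by (metis less_mult_imp_div_less mult.commute)
      have Q: "Qp m n d1 d0 W x r = Qp m n d1 d0 W' x' r"
      proof (rule poly_eqI_degree[where A="b ` S"])
        fix y assume "y \<in> b ` S"
        then obtain p where p: "p \<in> S" "y = b p" by blast
        have "out W x p r = out W' x' p r" using eq by simp
        then show "poly (Qp m n d1 d0 W x r) y = poly (Qp m n d1 d0 W' x' r) y"
          using p r poly_Qp[of r N1 m N0 n b W x p] poly_Qp[of r N1 m N0 n b W' x' p]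
          unfolding out_def d1_def d0_def by simp
      next
        have "m*n+n-2 < card (b ` S)" using cardA assms(11) assms(1,2)
          by (cases m; cases n) auto
        then show "degree (Qp m n d1 d0 W x r) < card (b ` S)"
             "degree (Qp m n d1 d0 W' x' r) < card (b ` S)"
          using degree_Qp[OF assms(2)] le_less_trans by blast+
      qed
      have "(\<Sum>j<n. cf d1 d0 W x r i j j) = (\<Sum>j<n. cf d1 d0 W' x' r i j j)"
      proof -
        have "coeff (Qp m n d1 d0 W x r) (n*i+(n-1)) = coeff (Qp m n d1 d0 W' x' r) (n*i+(n-1))"
          using Q by simp
        then show ?thesis by (simp only: coeff_Qp[OF i assms(2)])
      qed
      then show ?thesis
        by (simp only: block_sum[OF N1 N0 d1 True] r_def i_def)
    qed
  qed
  define dec where "dec y = (SOME s. \<exists>W x. y = out W x \<and> s = mat_vec N1 N0 W x)" for y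
  have "dec (out W x) = mat_vec N1 N0 W x" for W x
  proof -
    have "\<exists>W' x'. out W x = out W' x' \<and> dec (out W x) = mat_vec N1 N0 W' x'"
    proof -
      have "\<exists>s W' x'. out W x = out W' x' \<and> s = mat_vec N1 N0 W' x'" by blast
      from someI_ex[OF this] show ?thesis unfolding dec_def .
    qed
    then obtain W' x' where "out W x = out W' x'" "dec (out W x) = mat_vec N1 N0 W' x'"
      by blast
    then show ?thesis using key[of W x W' x'] by simp
  qed
  then have all: "\<forall>W x. dec (out W x) = mat_vec N1 N0 W x" by blast
  show ?thesis
    apply (rule exI[of _ dec])
    using all unfolding out_def by simp
qed

end
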